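(* Let $X$ be a Hausdorff space. Then every compact subset of $X$ is finite (i.e. $\mathcal{K}(X)=\mathcal{F}(X)$) if and only if every compact subset of $\mathcal{K}(X)$ is finite (i.e. $\mathcal{K}(\mathcal{K}(X))=\mathcal{F}(\mathcal{K}(X))$).
   Context: $\mathcal{K}(X)$ is the set of nonempty compact subsets of $X$ with the Vietoris topology (generated by $U^+=\{A: A\subset U\}$ and $U^-=\{A: A\cap U\neq\emptyset\}$ for $U$ open in $X$); $\mathcal{F}(X)$ is its subset of nonempty finite sets. *)

theory Defs
  imports "HOL-Analysis.Analysis"
begin

definition compact_sets :: "'a topology \<Rightarrow> 'a set set" where
  "compact_sets X = {K. K \<noteq> {} \<and> compactin X K}"

definition vietoris :: "'a topology \<Rightarrow> 'a set topology" where
  "vietoris X = subtopology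
     (topology_generated_by
        ({{A. A \<subseteq> U} | U. openin X U} \<union> {{A. A \<inter> U \<noteq> {}} | U. openin X U}))
     (compact_sets X)"

end

theory Submission
  imports Defs
begin

lemma vietoris_topspace: "topspace (vietoris X) = compact_sets X"
proof -
  have "compact_sets X \<subseteq> \<Union>({{A. A \<subseteq> U} | U. openin X U} \<union> {{A. A \<inter> U \<noteq> {}} | U. openin X U})"
  proof
    fix K assume "K \<in> compact_sets X"
    then have "K \<in> {A. A \<subseteq> topspace X}"
      by (auto simp: compact_sets_def compactin_subset_topspace)
    moreover have "{A. A \<subseteq> topspace X} \<in> {{A. A \<subseteq> U} | U. openin X U}" by blast
    ultimately show "K \<in> \<Union>({{A. A \<subseteq> U} | U. openin X U} \<union> {{A. A \<inter> U \<noteq> {}} | U. openin X U})"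
      by (meson UnI1 UnionI)
  qed
  then show ?thesis unfolding vietoris_def topspace_subtopology topology_generated_by_topspace
    by (rule Int_absorb1)
qed

lemma vietoris_open_upper:
  assumes "openin X V"
  shows "openin (vietoris X) ({B. B \<subseteq> V} \<inter> compact_sets X)"
  unfolding vietoris_def openin_subtopology
  by (rule exI[of _ "{B. B \<subseteq> V}"], intro conjI topology_generated_by_Basis) (use assms in auto)

lemma union_compact:
  assumes KK: "compactin (vietoris X) KK"
  shows "compactin X (\<Union>KK)"
proof -
  have sub: "KK \<subseteq> compact_sets X"
    using compactin_subset_topspace[OF KK] vietoris_topspace by metis
  have cA: "compactin X A" if "A \<in> KK" for A
    using sub that by (auto simp: compact_sets_def)
  show ?thesis
    unfolding compactin_def
  proof (intro conjI allI impI)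
    show "\<Union>KK \<subseteq> topspace X" using cA compactin_subset_topspace by blast
  next
    fix U assume U: "(\<forall>B\<in>U. openin X B) \<and> \<Union>KK \<subseteq> \<Union>U"
    have "\<forall>A\<in>KK. \<exists>F. finite F \<and> F \<subseteq> U \<and> A \<subseteq> \<Union>F"
    proof
      fix A assume A: "A \<in> KK"
      have "A \<subseteq> \<Union>U" using A U by blast
      then show "\<exists>F. finite F \<and> F \<subseteq> U \<and> A \<subseteq> \<Union>F"
      proof -
        have "\<forall>U. (\<forall>B\<in>U. openin X B) \<and> A \<subseteq> \<Union>U \<longrightarrow> (\<exists>F. finite F \<and> F \<subseteq> U \<and> A \<subseteq> \<Union>F)"
          using cA[OF A] unfolding compactin_def by (elim conjE)
        then show ?thesis using U \<open>A \<subseteq> \<Union>U\<close> by simp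
      qed
    qed
    then obtain F where F0: "\<forall>A\<in>KK. finite (F A) \<and> F A \<subseteq> U \<and> A \<subseteq> \<Union>(F A)"
      by (rule bchoice[THEN exE])
    have F: "finite (F A) \<and> F A \<subseteq> U \<and> A \<subseteq> \<Union>(F A)" if "A \<in> KK" for A
      using F0 that by (rule bspec)
    define W where "W A = {B. B \<subseteq> \<Union>(F A)} \<inter> compact_sets X" for A
    have Wo: "\<forall>C\<in>W ` KK. openin (vietoris X) C"
    proof
      fix C assume "C \<in> W ` KK"
      then obtain A where A: "A \<in> KK" "C = W A" by blast
      have "openin X (\<Union>(F A))"
      proof (rule openin_Union)
        fix S assume "S \<in> F A"
        moreover have "F A \<subseteq> U" using F[OF A(1)] by (elim conjE)
        ultimately have "S \<in> U" by (rule subsetD[rotated])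
        moreover have "\<forall>B\<in>U. openin X B" using U by (elim conjE)
        ultimately show "openin X S" by simp
      qed
      then have "openin (vietoris X) (W A)" unfolding W_def by (rule vietoris_open_upper)
      then show "openin (vietoris X) C" using A(2) by simp
    qed
    have Wc: "KK \<subseteq> \<Union>(W ` KK)"
    proof
      fix A assume A: "A \<in> KK"
      then have "A \<in> W A" using F[OF A] sub unfolding W_def by blast
      then show "A \<in> \<Union>(W ` KK)" using A by blast
    qed
    have "\<forall>U. (\<forall>B\<in>U. openin (vietoris X) B) \<and> KK \<subseteq> \<Union>U \<longrightarrow> (\<exists>F. finite F \<and> F \<subseteq> U \<and> KK \<subseteq> \<Union>F)"
      using KK unfolding compactin_def by (elim conjE)
    then have "\<exists>G. finite G \<and> G \<subseteq> W ` KK \<and> KK \<subseteq> \<Union>G" using Wo Wc by simp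
    then obtain G where G: "finite G" "G \<subseteq> W ` KK" "KK \<subseteq> \<Union>G" by blast
    obtain H where H: "H \<subseteq> KK" "finite H" "G = W ` H"
      using G finite_subset_image by metis
    show "\<exists>F'. finite F' \<and> F' \<subseteq> U \<and> \<Union>KK \<subseteq> \<Union>F'"
    proof (intro exI conjI)
      show "finite (\<Union>(F ` H))" using H F by auto
      show "\<Union>(F ` H) \<subseteq> U" using H F by blast
      show "\<Union>KK \<subseteq> \<Union>(\<Union>(F ` H))"
      proof
        fix x assume "x \<in> \<Union>KK"
        then obtain A where "A \<in> KK" "x \<in> A" by blast
        then obtain A' where "A' \<in> H" "A \<in> W A'" using G H by blast
        then show "x \<in> \<Union>(\<Union>(F ` H))" using \<open>x \<in> A\<close> unfolding W_def by blast
      qed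
    qed
  qed
qed

lemma singleton_cont: "continuous_map X (vietoris X) (\<lambda>x. {x})"
  unfolding vietoris_def
proof (rule continuous_map_into_subtopology)
  show "continuous_map X (topology_generated_by
     ({{A. A \<subseteq> U} | U. openin X U} \<union> {{A. A \<inter> U \<noteq> {}} | U. openin X U})) (\<lambda>x. {x})"
  proof (rule continuous_on_generated_topo)
    fix S assume "S \<in> {{A. A \<subseteq> U} | U. openin X U} \<union> {{A. A \<inter> U \<noteq> {}} | U. openin X U}"
    then obtain U where U: "openin X U" "S = {A. A \<subseteq> U} \<or> S = {A. A \<inter> U \<noteq> {}}" by blast
    then have "(\<lambda>x. {x}) -` S \<inter> topspace X = U"
      using openin_subset by auto
    then show "openin X ((\<lambda>x. {x}) -` S \<inter> topspace X)" using U by simp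
  next
    show "(\<lambda>x. {x}) ` topspace X \<subseteq> \<Union>({{A. A \<subseteq> U} | U. openin X U} \<union> {{A. A \<inter> U \<noteq> {}} | U. openin X U})"
    proof
      fix y assume "y \<in> (\<lambda>x. {x}) ` topspace X"
      then have "y \<in> {A. A \<subseteq> topspace X}" by blast
      moreover have "{A. A \<subseteq> topspace X} \<in> {{A. A \<subseteq> U} | U. openin X U}" by blast
      ultimately show "y \<in> \<Union>({{A. A \<subseteq> U} | U. openin X U} \<union> {{A. A \<inter> U \<noteq> {}} | U. openin X U})"
        by (meson UnI1 UnionI)
    qed
  qed
  show "(\<lambda>x. {x}) \<in> topspace X \<rightarrow> compact_sets X"
    by (auto simp: compact_sets_def)
qed

theorem proposition4p7:
  fixes X :: "'a topology"
  assumes "Hausdorff_space X"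
  shows "(\<forall>K. compactin X K \<longrightarrow> finite K) \<longleftrightarrow>
         (\<forall>\<K>. compactin (vietoris X) \<K> \<longrightarrow> finite \<K>)"
proof
  assume H: "\<forall>K. compactin X K \<longrightarrow> finite K"
  show "\<forall>\<K>. compactin (vietoris X) \<K> \<longrightarrow> finite \<K>"
  proof (intro allI impI)
    fix KK assume "compactin (vietoris X) KK"
    then have "finite (\<Union>KK)" using H union_compact by blast
    then show "finite KK" using finite_UnionD by blast
  qed
next
  assume H: "\<forall>\<K>. compactin (vietoris X) \<K> \<longrightarrow> finite \<K>"
  show "\<forall>K. compactin X K \<longrightarrow> finite K"
  proof (intro allI impI)
    fix K assume "compactin X K"
    then have "finite ((\<lambda>x. {x}) ` K)" using H image_compactin singleton_cont by blast
    then show "finite K" using finite_imageD inj_on_def by (metis (no_types, lifting) singleton_inject)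
  qed
qed

end
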